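(* Let $n\ge1$. For $v,w\in\mathfrak{S}_n$ set $$\lambda(v,w)=\#\{J\subseteq[n-1]:\mathrm{Des}(w^{-1}v_J)\subseteq J,\ \#J\text{ odd}\}-\#\{J\subseteq[n-1]:\mathrm{Des}(w^{-1}v_J)\subseteq J,\ \#J\text{ even}\}.$$ Then the antipode $S$ of $\mathfrak{S}Sym$ satisfies $S(\mathcal{F}_v)=\sum_{w\in\mathfrak{S}_n}\lambda(v,w)\,\mathcal{F}_w$.
   Context: Permutations in one-line notation, product is composition $(uv)(i)=u(v(i))$. $\mathrm{Des}(x)=\{p\in[n-1]:x_p>x_{p+1}\}$. $\mathrm{st}(a_1,\ldots,a_m)\in\mathfrak{S}_m$ is the permutation with the same relative order as the distinct integers $a_i$. For $x\in\mathfrak{S}_a,y\in\mathfrak{S}_b$, $x\times y\in\mathfrak{S}_{a+b}$ has $(x\times y)(i)=x_i$ ($i\le a$), $(x\times y)(a+j)=a+y_j$. For $v\in\mathfrak{S}_n$ and $J=\{p_1<\cdots<p_k\}\subseteq[n-1]$, $v_J=\mathrm{st}(v_1,\ldots,v_{p_1})\times\mathrm{st}(v_{p_1+1},\ldots,v_{p_2})\times\cdots\times\mathrm{st}(v_{p_k+1},\ldots,v_n)$, $v_\emptyset=v$. $\mathfrak{S}Sym$ is the graded connected Hopf algebra over $\mathbb{Q}$ with basis $\{\mathcal{F}_u:u\in\mathfrak{S}_n,n\ge0\}$, product $\mathcal{F}_u\cdot\mathcal{F}_v=\sum_{\zeta}\mathcal{F}_{(u\times v)\cdot\zeta^{-1}}$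 over $\zeta\in\mathfrak{S}_{p+q}$ with $\zeta_1<\cdots<\zeta_p$, $\zeta_{p+1}<\cdots<\zeta_{p+q}$ (for $u\in\mathfrak{S}_p,v\in\mathfrak{S}_q$), and coproduct $\Delta(\mathcal{F}_u)=\sum_{p=0}^n\mathcal{F}_{\mathrm{st}(u_1..u_p)}\otimes\mathcal{F}_{\mathrm{st}(u_{p+1}..u_n)}$. *)

theory Defs
  imports Complex_Main
begin

(* Permutations of [n] in one-line notation, as lists of values 1..n *)
definition perms :: "nat \<Rightarrow> nat list set" where
  "perms n = {u. distinct u \<and> set u = {1..n}}"

definition st :: "nat list \<Rightarrow> nat list" where
  "st xs = map (\<lambda>x. card {y \<in> set xs. y \<le> x}) xs"

(* composition (a b)(i) = a(b(i)) in one-line notation *)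
definition comp_perm :: "nat list \<Rightarrow> nat list \<Rightarrow> nat list" where
  "comp_perm a b = map (\<lambda>i. a ! (i - 1)) b"

definition inv_perm :: "nat list \<Rightarrow> nat list" where
  "inv_perm w = map (\<lambda>i. Suc (LEAST j. j < length w \<and> w ! j = i)) [1..<Suc (length w)]"

definition cross :: "nat list \<Rightarrow> nat list \<Rightarrow> nat list" where
  "cross x y = x @ map (\<lambda>j. length x + j) y"

(* descent set Des(x) \<subseteq> [n-1], positions 1-based *)
definition Des :: "nat list \<Rightarrow> nat set" where
  "Des x = {p \<in> {1..<length x}. x ! (p - 1) > x ! p}"

(* the blocks (v_1..v_{p_1}), (v_{p_1+1}..v_{p_2}), ..., (v_{p_k+1}..v_n) *)
definition blocks :: "nat list \<Rightarrow> nat set \<Rightarrow> nat list list" where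
  "blocks v J = (let b = 0 # sorted_list_of_set J @ [length v] in
     map (\<lambda>i. take (b ! Suc i - b ! i) (drop (b ! i) v)) [0..<length b - 1])"

definition vJ :: "nat list \<Rightarrow> nat set \<Rightarrow> nat list" where
  "vJ v J = foldl cross [] (map st (blocks v J))"

definition lam :: "nat \<Rightarrow> nat list \<Rightarrow> nat list \<Rightarrow> int" where
  "lam n v w =
     int (card {J. J \<subseteq> {1..<n} \<and> Des (comp_perm (inv_perm w) (vJ v J)) \<subseteq> J \<and> odd (card J)})
   - int (card {J. J \<subseteq> {1..<n} \<and> Des (comp_perm (inv_perm w) (vJ v J)) \<subseteq> J \<and> even (card J)})"

(* Elements of SSym: finitely supported coefficient functions on permutations *)
type_synonym ssym = "nat list \<Rightarrow> rat"

definition basisF :: "nat list \<Rightarrow> ssym" where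
  "basisF u = (\<lambda>w. if w = u then 1 else 0)"

definition in_ssym :: "ssym \<Rightarrow> bool" where
  "in_ssym f \<longleftrightarrow> finite {w. f w \<noteq> 0} \<and> {w. f w \<noteq> 0} \<subseteq> (\<Union>n. perms n)"

definition shuffles_perm :: "nat \<Rightarrow> nat \<Rightarrow> nat list set" where
  "shuffles_perm p q = {z \<in> perms (p + q). sorted_wrt (<) (take p z) \<and> sorted_wrt (<) (drop p z)}"

(* coefficient of F_w in F_u . F_v = sum_zeta F_{(u x v) zeta^{-1}} *)
definition mulF :: "nat list \<Rightarrow> nat list \<Rightarrow> ssym" where
  "mulF u v = (\<lambda>w. of_nat (card {z \<in> shuffles_perm (length u) (length v).
                    comp_perm (cross u v) (inv_perm z) = w}))"

definition mult :: "ssym \<Rightarrow> ssym \<Rightarrow> ssym" where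
  "mult f g = (\<lambda>w. \<Sum>u\<in>{u. f u \<noteq> 0}. \<Sum>v\<in>{v. g v \<noteq> 0}. f u * g v * mulF u v w)"

(* S is given by its values on the basis (extended linearly); the antipode axioms
   m (S \<otimes> id) \<Delta> = \<eta> \<epsilon> = m (id \<otimes> S) \<Delta> evaluated on each F_u,
   with \<Delta>(F_u) = \<Sum>_p F_{st(u_1..u_p)} \<otimes> F_{st(u_{p+1}..u_n)}, unit F_[], counit \<epsilon>(F_u) = [n = 0]. *)
definition is_antipode :: "(nat list \<Rightarrow> ssym) \<Rightarrow> bool" where
  "is_antipode S \<longleftrightarrow>
     (\<forall>n. \<forall>u\<in>perms n. in_ssym (S u)) \<and>
     (\<forall>n. \<forall>u\<in>perms n.
        (\<lambda>w. \<Sum>p\<le>n. mult (S (st (take p u))) (basisF (st (drop p u))) w)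
          = (if n = 0 then basisF [] else (\<lambda>_. 0))) \<and>
     (\<forall>n. \<forall>u\<in>perms n.
        (\<lambda>w. \<Sum>p\<le>n. mult (basisF (st (take p u))) (S (st (drop p u))) w)
          = (if n = 0 then basisF [] else (\<lambda>_. 0)))"

end

theory Submission
  imports Defs
begin

declare upt_Suc[simp del]

lemma map_upt_nth: "1 \<le> a \<Longrightarrow> a \<le> n \<Longrightarrow> map f [Suc 0..<Suc n] ! (a - 1) = f a"
  by simp

fun pos :: "nat list \<Rightarrow> nat \<Rightarrow> nat" where
  "pos [] a = 0"
| "pos (c # w) a = (if c = a then 0 else Suc (pos w a))"

lemma pos_lt: "a \<in> set w \<Longrightarrow> pos w a < length w"
  by (induction w) auto

lemma nth_pos: "a \<in> set w \<Longrightarrow> w ! pos w a = a"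
  by (induction w) auto

lemma pos_nth: "distinct w \<Longrightarrow> j < length w \<Longrightarrow> pos w (w ! j) = j"
  by (induction w arbitrary: j) (auto simp: less_Suc_eq_0_disj)

lemma pos_inj: "a \<in> set w \<Longrightarrow> b \<in> set w \<Longrightarrow> pos w a = pos w b \<Longrightarrow> a = b"
  by (metis nth_pos)

lemma perms_D: "v \<in> perms n \<Longrightarrow> length v = n \<and> distinct v \<and> set v = {1..n}"
proof -
  assume "v \<in> perms n"
  then have "distinct v" "set v = {1..n}" unfolding perms_def by auto
  moreover then have "length v = n" using distinct_card[of v] by simp
  ultimately show ?thesis by simp
qed

lemma perms_I: "distinct v \<Longrightarrow> set v = {1..n} \<Longrightarrow> v \<in> perms n"
  unfolding perms_def by auto

lemma perms_I2: "length v = n \<Longrightarrow> set v = {1..n} \<Longrightarrow> v \<in> perms n"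
proof -
  assume a: "length v = n" "set v = {1..n}"
  then have "card (set v) = length v" by simp
  then have "distinct v" by (rule card_distinct)
  then show ?thesis using a unfolding perms_def by auto
qed

lemma length_inv_perm[simp]: "length (inv_perm w) = length w"
  by (simp add: inv_perm_def)

lemma inv_perm_eq:
  assumes "w \<in> perms n"
  shows "inv_perm w = map (\<lambda>a. Suc (pos w a)) [1..<Suc n]"
proof -
  have w: "length w = n" "distinct w" "set w = {1..n}" using perms_D[OF assms(1)] by auto
  have "(LEAST j. j < length w \<and> w ! j = a) = pos w a" if "a \<in> {1..n}" for a
  proof (rule Least_equality)
    show "pos w a < length w \<and> w ! pos w a = a" using that w by (auto simp: pos_lt nth_pos)
    show "\<And>y. y < length w \<and> w ! y = a \<Longrightarrow> pos w a \<le> y" using w pos_nth by auto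
  qed
  then show ?thesis unfolding inv_perm_def using w by (auto intro!: map_cong)
qed

lemma pos_image:
  assumes "distinct w" shows "pos w ` set w = {0..<length w}"
proof
  show "pos w ` set w \<subseteq> {0..<length w}" using pos_lt by auto
  show "{0..<length w} \<subseteq> pos w ` set w"
  proof
    fix j assume "j \<in> {0..<length w}"
    then show "j \<in> pos w ` set w" using pos_nth[OF assms, of j] by (metis atLeastLessThan_iff image_eqI nth_mem)
  qed
qed

lemma inv_perm_perms:
  assumes "w \<in> perms n" shows "inv_perm w \<in> perms n"
proof -
  have w: "length w = n" "distinct w" "set w = {1..n}" using perms_D[OF assms(1)] by auto
  have "set (inv_perm w) = Suc ` pos w ` set w"
    using inv_perm_eq[OF assms] w by (auto simp: atLeastLessThanSuc_atLeastAtMost)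
  also have "\<dots> = {1..n}" using pos_image[OF w(2)] w(1)
    by (simp add: image_Suc_atLeastLessThan atLeastLessThanSuc_atLeastAtMost)
  finally have "set (inv_perm w) = {1..n}" .
  then show ?thesis by (intro perms_I2) (simp_all add: w(1))
qed

lemma comp_perm_nth: "k < length b \<Longrightarrow> comp_perm a b ! k = a ! (b ! k - 1)"
  by (simp add: comp_perm_def)

lemma length_comp_perm[simp]: "length (comp_perm a b) = length b"
  by (simp add: comp_perm_def)

lemma comp_assoc: "set c \<subseteq> {1..length b} \<Longrightarrow> comp_perm (comp_perm a b) c = comp_perm a (comp_perm b c)"
proof -
  assume c: "set c \<subseteq> {1..length b}"
  have "x - 1 < length b" if "x \<in> set c" for x using c that by force
  then show ?thesis unfolding comp_perm_def by (auto intro!: map_cong)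
qed

lemma comp_id: "length a = n \<Longrightarrow> comp_perm a [1..<Suc n] = a"
  unfolding comp_perm_def by (auto intro!: nth_equalityI)

lemma comp_inv_left:
  assumes "z \<in> perms n" shows "comp_perm (inv_perm z) z = [1..<Suc n]"
proof -
  have z: "length z = n" "distinct z" "set z = {1..n}" using perms_D[OF assms(1)] by auto
  show ?thesis
  proof (rule nth_equalityI)
    show "length (comp_perm (inv_perm z) z) = length [1..<Suc n]" using z by (simp)
    fix k assume "k < length (comp_perm (inv_perm z) z)"
    then have k: "k < n" using z by simp
    then have zk: "z ! k \<in> {1..n}" using z nth_mem by blast
    have "comp_perm (inv_perm z) z ! k = inv_perm z ! (z ! k - 1)" using k z by (simp add: comp_perm_nth)
    also have "\<dots> = Suc (pos z (z ! k))" using zk map_upt_nth[of "z ! k" n "\<lambda>a. Suc (pos z a)"] by (simp add: inv_perm_eq[OF assms])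
    also have "\<dots> = Suc k" using pos_nth z k by simp
    finally show "comp_perm (inv_perm z) z ! k = [1..<Suc n] ! k" using k by (simp)
  qed
qed

lemma comp_inv_right:
  assumes "z \<in> perms n" shows "comp_perm z (inv_perm z) = [1..<Suc n]"
proof -
  have z: "length z = n" "distinct z" "set z = {1..n}" using perms_D[OF assms(1)] by auto
  show ?thesis
  proof (rule nth_equalityI)
    show "length (comp_perm z (inv_perm z)) = length [1..<Suc n]" using z by (simp)
    fix k assume "k < length (comp_perm z (inv_perm z))"
    then have k: "k < n" using z by simp
    have "comp_perm z (inv_perm z) ! k = z ! (inv_perm z ! k - 1)" using k z by (simp add: comp_perm_nth)
    also have "\<dots> = z ! pos z (Suc k)" using k by (simp add: inv_perm_eq[OF assms])
    also have "\<dots> = Suc k" using k z by (simp add: nth_pos)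
    finally show "comp_perm z (inv_perm z) ! k = [1..<Suc n] ! k" using k by (simp)
  qed
qed

lemma perms_set_sub: "z \<in> perms n \<Longrightarrow> set z \<subseteq> {1..n}"
  using perms_D by blast

lemma comp_inv_iff:
  assumes z: "z \<in> perms n" and y: "length y = n"
  shows "w = comp_perm y (inv_perm z) \<longleftrightarrow> length w = n \<and> comp_perm w z = y"
proof
  assume w: "w = comp_perm y (inv_perm z)"
  then have "length w = n" using perms_D[OF z] by simp
  moreover have "comp_perm w z = y"
  proof -
    have "comp_perm w z = comp_perm y (comp_perm (inv_perm z) z)"
      using w comp_assoc[of z "inv_perm z" y] perms_D[OF z] by simp
    then show ?thesis using comp_inv_left[OF z] comp_id[OF y] by simp
  qed
  ultimately show "length w = n \<and> comp_perm w z = y" by simp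
next
  assume w: "length w = n \<and> comp_perm w z = y"
  have "comp_perm y (inv_perm z) = comp_perm w (comp_perm z (inv_perm z))"
    using w comp_assoc[of "inv_perm z" z w] perms_set_sub[OF inv_perm_perms[OF z]] perms_D[OF z] by simp
  then show "w = comp_perm y (inv_perm z)" using comp_inv_right[OF z] comp_id[of w n] w by simp
qed

lemma good_char:
  assumes w: "w \<in> perms n" and y: "y \<in> perms n"
  shows "Des (comp_perm (inv_perm w) y) \<subseteq> J \<longleftrightarrow>
     (\<forall>i\<in>{1..<n}. i \<notin> J \<longrightarrow> pos w (y ! (i - 1)) \<le> pos w (y ! i))"
proof -
  have yy: "length y = n" "distinct y" "set y = {1..n}" using perms_D[OF y] by auto
  have e: "comp_perm (inv_perm w) y ! k = Suc (pos w (y ! k))" if "k < n" for k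
  proof -
    have "y ! k \<in> {1..n}" using yy that nth_mem by blast
    then show ?thesis using that yy map_upt_nth[of "y ! k" n "\<lambda>a. Suc (pos w a)"] by (simp add: comp_perm_nth inv_perm_eq[OF w])
  qed
  have d: "Des (comp_perm (inv_perm w) y) = {p \<in> {1..<n}. pos w (y ! (p - 1)) > pos w (y ! p)}"
  proof -
    have "comp_perm (inv_perm w) y ! (p - 1) > comp_perm (inv_perm w) y ! p \<longleftrightarrow> pos w (y ! (p - 1)) > pos w (y ! p)"
      if "p \<in> {1..<n}" for p
    proof -
      have "p - 1 < n" using that by auto
      then show ?thesis using e[of p] e[of "p - 1"] that by simp
    qed
    then show ?thesis unfolding Des_def using yy by auto
  qed
  show ?thesis unfolding d by (auto simp: not_less)
qed

lemma map_pos_Cons: "c \<notin> set xs \<Longrightarrow> map (pos (c # w)) xs = map (Suc \<circ> pos w) xs"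
  by (induction xs) auto

lemma sorted_pos_filter: "distinct w \<Longrightarrow> sorted_wrt (<) (map (pos w) (filter P w))"
proof (induction w)
  case Nil then show ?case by simp
next
  case (Cons c w)
  have nc: "c \<notin> set (filter P w)" using Cons.prems by auto
  have ih: "sorted_wrt (\<lambda>x y. pos w x < pos w y) (filter P w)"
    using Cons by (simp add: sorted_wrt_map)
  have s: "sorted_wrt (\<lambda>x y. pos (c # w) x < pos (c # w) y) (filter P w)"
    by (rule sorted_wrt_mono_rel[OF _ ih]) (use nc in auto)
  have "sorted_wrt (\<lambda>x y. pos (c # w) x < pos (c # w) y) (filter P (c # w))"
    using s nc by (cases "P c") (auto simp del: pos.simps, auto)
  then show ?case by (simp add: sorted_wrt_map del: pos.simps)
qed

lemma filter_pos_iff: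
  assumes w: "distinct w" and c: "distinct c" and sc: "set c = {a \<in> set w. P a}"
  shows "filter P w = c \<longleftrightarrow> (\<forall>i. Suc i < length c \<longrightarrow> pos w (c ! i) \<le> pos w (c ! Suc i))"
proof
  assume f: "filter P w = c"
  have "sorted_wrt (<) (map (pos w) c)" using sorted_pos_filter[OF w, of P] f by simp
  then have "\<forall>i. Suc i < length c \<longrightarrow> pos w (c ! i) < pos w (c ! Suc i)"
    by (simp add: sorted_wrt_iff_nth_Suc_transp)
  then show "\<forall>i. Suc i < length c \<longrightarrow> pos w (c ! i) \<le> pos w (c ! Suc i)" by (simp add: less_imp_le)
next
  assume r: "\<forall>i. Suc i < length c \<longrightarrow> pos w (c ! i) \<le> pos w (c ! Suc i)"
  have inj: "inj_on (pos w) (set w)" by (meson inj_onI pos_inj)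
  have s1: "sorted (map (pos w) c)" using r by (simp add: sorted_iff_nth_Suc)
  have d1: "distinct (map (pos w) c)" using c inj sc by (simp add: distinct_map inj_on_subset)
  have s2: "sorted (map (pos w) (filter P w))" using sorted_pos_filter[OF w, of P] by (simp add: sorted_wrt_mono_rel[of _ "(<)" "(\<le>)"] strict_sorted_iff)
  have d2: "distinct (map (pos w) (filter P w))" using w inj by (simp add: distinct_map inj_on_subset)
  have "map (pos w) c = map (pos w) (filter P w)"
    by (rule sorted_distinct_set_unique[OF s1 d1 s2 d2]) (simp add: sc)
  moreover have "inj_on (pos w) (set c \<union> set (filter P w))" using inj sc by (auto intro: inj_on_subset)
  ultimately show "filter P w = c" using inj_on_map_eq_map by metis
qed

lemma pos_filter_le:
  assumes "distinct w" "a \<in> set (filter P w)" "b \<in> set (filter P w)"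
  shows "pos (filter P w) a \<le> pos (filter P w) b \<longleftrightarrow> pos w a \<le> pos w b"
  using assms by (induction w) (auto split: if_splits)

lemma set_shift: "(\<lambda>j. p + j) ` {1..q} = {Suc p..p + q}"
  by (simp add: image_add_atLeastAtMost)

lemma cross_perms:
  assumes u: "u \<in> perms p" and x: "x \<in> perms q"
  shows "cross u x \<in> perms (p + q)"
proof -
  have uu: "length u = p" "distinct u" "set u = {1..p}" using perms_D[OF u] by auto
  have xx: "length x = q" "distinct x" "set x = {1..q}" using perms_D[OF x] by auto
  have d: "distinct (map (\<lambda>j. p + j) x)" using xx by (simp add: distinct_map inj_on_def)
  have s: "set (map (\<lambda>j. p + j) x) = {Suc p..p + q}" using xx set_shift by simp
  show ?thesis unfolding cross_def using uu d s by (intro perms_I) auto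
qed

lemma length_cross[simp]: "length (cross u x) = length u + length x"
  by (simp add: cross_def)

lemma mulF_char:
  assumes u: "u \<in> perms p" and x: "x \<in> perms q"
  shows "mulF u x w = (if w \<in> perms (p + q) \<and> filter (\<lambda>a. a \<le> p) w = u
                          \<and> filter (\<lambda>a. p < a) w = map (\<lambda>j. p + j) x then 1 else 0)"
proof -
  define n where "n = p + q"
  define y where "y = cross u x"
  define z0 where "z0 = map (\<lambda>a. Suc (pos w a)) y"
  define Z where "Z = {z \<in> shuffles_perm p q. comp_perm y (inv_perm z) = w}"
  have uu: "length u = p" "distinct u" "set u = {1..p}" using perms_D[OF u] by auto
  have xx: "length x = q" "distinct x" "set x = {1..q}" using perms_D[OF x] by auto
  have yp: "y \<in> perms n" unfolding y_def n_def by (rule cross_perms[OF u x])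
  have yy: "length y = n" "distinct y" "set y = {1..n}" using perms_D[OF yp] by auto
  have ytake: "take p y = u" and ydrop: "drop p y = map (\<lambda>j. p + j) x"
    unfolding y_def cross_def using uu by auto
  have ynth1: "y ! i = u ! i" if "i < p" for i using that uu unfolding y_def cross_def by (simp add: nth_append)
  have ynth2: "y ! (p + i) = p + x ! i" if "i < q" for i using that uu xx unfolding y_def cross_def by (simp add: nth_append)
  let ?c = "map (\<lambda>j. p + j) x"
  have cd: "distinct ?c" using xx by (simp add: distinct_map inj_on_def)
  have cs: "set ?c = {Suc p..n}" using xx set_shift unfolding n_def by simp
  let ?cond = "w \<in> perms n \<and> filter (\<lambda>a. a \<le> p) w = u \<and> filter (\<lambda>a. p < a) w = ?c"
  have A: "w \<in> perms n \<and> z = z0 \<and> filter (\<lambda>a. a \<le> p) w = u \<and> filter (\<lambda>a. p < a) w = ?c"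
    if zZ: "z \<in> Z" for z
  proof -
    have zs: "z \<in> perms n" "sorted_wrt (<) (take p z)" "sorted_wrt (<) (drop p z)"
      using zZ unfolding Z_def shuffles_perm_def n_def by auto
    have zz: "length z = n" "distinct z" "set z = {1..n}" using perms_D[OF zs(1)] by auto
    have wz: "length w = n" "comp_perm w z = y"
      using comp_inv_iff[OF zs(1) yy(1), of w] zZ unfolding Z_def by auto
    have ynth: "y ! k = w ! (z ! k - 1)" if "k < n" for k
      using wz that zz by (metis comp_perm_nth)
    have "set y = (\<lambda>j. w ! (j - 1)) ` set z"
      using wz(2) unfolding comp_perm_def by auto
    also have "\<dots> = (\<lambda>j. w ! (j - 1)) ` {1..n}" using zz by simp
    also have "\<dots> = set w"
    proof -
      have "(\<lambda>j. w ! (j - 1)) ` {1..n} = (\<lambda>i. w ! i) ` {0..<n}"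
      proof (rule set_eqI, rule iffI)
        fix a assume "a \<in> (\<lambda>j. w ! (j - 1)) ` {1..n}"
        then obtain j where "j \<in> {1..n}" "a = w ! (j - 1)" by auto
        then show "a \<in> (\<lambda>i. w ! i) ` {0..<n}" by (intro image_eqI[of _ _ "j - 1"]) auto
      next
        fix a assume "a \<in> (\<lambda>i. w ! i) ` {0..<n}"
        then obtain i where "i \<in> {0..<n}" "a = w ! i" by auto
        then show "a \<in> (\<lambda>j. w ! (j - 1)) ` {1..n}" by (intro image_eqI[of _ _ "Suc i"]) auto
      qed
      also have "\<dots> = set w" using wz(1) by (auto simp: in_set_conv_nth)
      finally show ?thesis .
    qed
    finally have "set w = {1..n}" using yy by simp
    then have wp: "w \<in> perms n" using wz(1) by (intro perms_I2) auto
    have ww: "distinct w" "set w = {1..n}" using perms_D[OF wp] by auto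
    have pk: "pos w (y ! k) = z ! k - 1" if "k < n" for k
    proof -
      have "z ! k \<in> {1..n}" using zz that nth_mem by blast
      then show ?thesis using ynth[OF that] pos_nth[OF ww(1)] wz(1) by auto
    qed
    have zeq: "z = z0"
    proof (rule nth_equalityI)
      show "length z = length z0" using zz yy by (simp add: z0_def)
      fix k assume "k < length z"
      then have k: "k < n" using zz by simp
      have "z ! k \<in> {1..n}" using zz k nth_mem by blast
      then show "z ! k = z0 ! k" using pk[OF k] k yy by (simp add: z0_def)
    qed
    have f1: "filter (\<lambda>a. a \<le> p) w = u"
    proof (subst filter_pos_iff[OF ww(1) uu(2)])
      show "set u = {a \<in> set w. a \<le> p}" using uu ww unfolding n_def by auto
      show "\<forall>i. Suc i < length u \<longrightarrow> pos w (u ! i) \<le> pos w (u ! Suc i)"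
      proof (intro allI impI)
        fix i assume i: "Suc i < length u"
        have "take p z ! i < take p z ! Suc i" using zs(2) i uu zz unfolding n_def
          by (simp add: sorted_wrt_iff_nth_Suc_transp)
        then have "z ! i < z ! Suc i" using i uu by simp
        then show "pos w (u ! i) \<le> pos w (u ! Suc i)"
          using pk[of i] pk[of "Suc i"] ynth1[of i] ynth1[of "Suc i"] i uu unfolding n_def by simp
      qed
    qed
    have f2: "filter (\<lambda>a. p < a) w = ?c"
    proof (subst filter_pos_iff[OF ww(1) cd])
      show "set ?c = {a \<in> set w. p < a}" using cs ww by auto
      show "\<forall>i. Suc i < length ?c \<longrightarrow> pos w (?c ! i) \<le> pos w (?c ! Suc i)"
      proof (intro allI impI)
        fix i assume i: "Suc i < length ?c"
        have "drop p z ! i < drop p z ! Suc i" using zs(3) i xx zz unfolding n_def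
          by (simp add: sorted_wrt_iff_nth_Suc_transp)
        then have "z ! (p + i) < z ! (p + Suc i)" using i uu zz unfolding n_def by simp
        then show "pos w (?c ! i) \<le> pos w (?c ! Suc i)"
          using pk[of "p + i"] pk[of "p + Suc i"] ynth2[of i] ynth2[of "Suc i"] i xx unfolding n_def by simp
      qed
    qed
    show ?thesis using wp zeq f1 f2 by simp
  qed
  have B: "z0 \<in> Z" if c: ?cond
  proof -
    have ww: "length w = n" "distinct w" "set w = {1..n}" using perms_D c by auto
    have z0p: "z0 \<in> perms n"
    proof (rule perms_I2)
      show "length z0 = n" using yy by (simp add: z0_def)
      have "set z0 = Suc ` pos w ` set w" using yy ww by (simp add: z0_def image_image)
      also have "\<dots> = {1..n}" using pos_image[OF ww(2)] ww(1)
        by (simp add: atLeastLessThanSuc_atLeastAtMost)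
      finally show "set z0 = {1..n}" .
    qed
    have t: "take p z0 = map Suc (map (pos w) (filter (\<lambda>a. a \<le> p) w))"
      using c ytake by (simp add: z0_def take_map)
    have d: "drop p z0 = map Suc (map (pos w) (filter (\<lambda>a. p < a) w))"
      using c ydrop by (simp add: z0_def drop_map)
    have s1: "sorted_wrt (<) (take p z0)" unfolding t
      using sorted_pos_filter[OF ww(2)] by (simp add: sorted_wrt_map)
    have s2: "sorted_wrt (<) (drop p z0)" unfolding d
      using sorted_pos_filter[OF ww(2)] by (simp add: sorted_wrt_map)
    have "comp_perm w z0 = y"
      unfolding comp_perm_def z0_def using yy ww by (auto intro!: map_idI nth_pos)
    then have "w = comp_perm y (inv_perm z0)" using comp_inv_iff[OF z0p yy(1)] ww by simp
    then show ?thesis unfolding Z_def shuffles_perm_def using z0p s1 s2 n_def by simp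
  qed
  have "Z = (if ?cond then {z0} else {})"
    using A B by auto
  then have "card Z = (if ?cond then 1 else 0)" by simp
  then show ?thesis unfolding mulF_def Z_def y_def n_def uu xx by simp
qed

definition stf :: "nat list \<Rightarrow> nat \<Rightarrow> nat" where
  "stf xs x = card {y \<in> set xs. y \<le> x}"

lemma st_stf: "st xs = map (stf xs) xs"
  by (simp add: st_def stf_def)

lemma stf_mono: "x \<in> set xs \<Longrightarrow> x' \<in> set xs \<Longrightarrow> x < x' \<Longrightarrow> stf xs x < stf xs x'"
proof -
  assume a: "x \<in> set xs" "x' \<in> set xs" "x < x'"
  have "{y \<in> set xs. y \<le> x} \<subset> {y \<in> set xs. y \<le> x'}"
  proof
    show "{y \<in> set xs. y \<le> x} \<subseteq> {y \<in> set xs. y \<le> x'}" using a by auto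
    have "x' \<in> {y \<in> set xs. y \<le> x'}" "x' \<notin> {y \<in> set xs. y \<le> x}" using a by auto
    then show "{y \<in> set xs. y \<le> x} \<noteq> {y \<in> set xs. y \<le> x'}" by blast
  qed
  then show ?thesis unfolding stf_def by (rule psubset_card_mono[rotated]) simp
qed

lemma stf_range: "x \<in> set xs \<Longrightarrow> stf xs x \<in> {1..length xs}"
proof -
  assume x: "x \<in> set xs"
  have "{y \<in> set xs. y \<le> x} \<noteq> {}" using x by auto
  then have "1 \<le> stf xs x" unfolding stf_def by (simp add: Suc_leI card_gt_0_iff)
  moreover have "stf xs x \<le> card (set xs)" unfolding stf_def by (rule card_mono) auto
  moreover have "card (set xs) \<le> length xs" by (rule card_length)
  ultimately show ?thesis by simp
qed

lemma stf_inj: "inj_on (stf xs) (set xs)"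
  by (rule inj_onI) (metis less_irrefl linorder_neqE_nat stf_mono)

lemma st_perms: "distinct xs \<Longrightarrow> st xs \<in> perms (length xs)"
proof -
  assume d: "distinct xs"
  have d2: "distinct (st xs)" unfolding st_stf using d stf_inj by (simp add: distinct_map)
  have sub: "set (st xs) \<subseteq> {1..length xs}" unfolding st_stf using stf_range by auto
  have "card (set (st xs)) = length (st xs)" by (rule distinct_card[OF d2])
  then have "card (set (st xs)) = length xs" by (simp add: st_def)
  then have "set (st xs) = {1..length xs}" using sub by (intro card_subset_eq) auto
  then show ?thesis using d2 by (intro perms_I)
qed

lemma st_map_mono:
  assumes g: "\<And>x y. x \<in> set xs \<Longrightarrow> y \<in> set xs \<Longrightarrow> x < y \<Longrightarrow> g x < g y"
  shows "st (map g xs) = st xs"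
proof -
  have le: "g y \<le> g x \<longleftrightarrow> y \<le> x" if "x \<in> set xs" "y \<in> set xs" for x y
    using g[OF that] g[OF that(2,1)] by (metis linorder_neqE_nat not_le order.order_iff_strict)
  have inj: "inj_on g (set xs)" by (rule inj_onI) (metis g less_irrefl linorder_neqE_nat)
  have "card {y \<in> set (map g xs). y \<le> g x} = card {y \<in> set xs. y \<le> x}" if x: "x \<in> set xs" for x
  proof -
    have "{y \<in> set (map g xs). y \<le> g x} = g ` {y \<in> set xs. y \<le> x}" using le[OF x] by auto
    moreover have "inj_on g {y \<in> set xs. y \<le> x}" using inj by (rule inj_on_subset) auto
    ultimately show ?thesis by (simp add: card_image)
  qed
  then show ?thesis unfolding st_def by auto
qed

lemma st_st: "st (st xs) = st xs"
proof -
  have h: "st (map (stf xs) xs) = st xs" by (rule st_map_mono) (rule stf_mono)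
  then show ?thesis by (metis st_stf)
qed

lemma st_perm_id: "v \<in> perms n \<Longrightarrow> st v = v"
proof -
  assume v: "v \<in> perms n"
  have vv: "length v = n" "distinct v" "set v = {1..n}" using perms_D[OF v] by auto
  have "card {y \<in> set v. y \<le> x} = x" if "x \<in> set v" for x
  proof -
    have "{y \<in> set v. y \<le> x} = {1..x}" using vv that by auto
    then show ?thesis by simp
  qed
  then show ?thesis unfolding st_def by (simp add: map_idI)
qed

lemma sl_insert_max:
  assumes "finite A" "\<forall>a\<in>A. a < p"
  shows "sorted_list_of_set (insert p A) = sorted_list_of_set A @ [p]"
proof (rule sorted_distinct_set_unique)
  show "sorted (sorted_list_of_set A @ [p])" using assms by (auto simp: sorted_append less_imp_le)
  show "distinct (sorted_list_of_set A @ [p])" using assms by auto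
  have "set (sorted_list_of_set (insert p A)) = insert p A"
    by (rule set_sorted_list_of_set) (use assms in simp)
  then show "set (sorted_list_of_set (insert p A)) = set (sorted_list_of_set A @ [p])" using assms by auto
  show "sorted (sorted_list_of_set (insert p A))" by (rule sorted_sorted_list_of_set)
  show "distinct (sorted_list_of_set (insert p A))" by (rule distinct_sorted_list_of_set)
qed

lemma blocks_insert:
  assumes J: "J \<subseteq> {1..<p}" and p: "p \<le> length v"
  shows "blocks v (insert p J) = blocks (take p v) J @ [drop p v]"
proof -
  have fJ: "finite J" using J finite_subset by blast
  define b' where "b' = 0 # sorted_list_of_set J @ [p]"
  have sl: "sorted_list_of_set (insert p J) = sorted_list_of_set J @ [p]"
  proof -
    have "\<forall>a\<in>J. a < p" using J by auto
    then show ?thesis using sl_insert_max[OF fJ, of p] by simp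
  qed
  have b: "0 # sorted_list_of_set (insert p J) @ [length v] = b' @ [length v]"
    unfolding b'_def sl by simp
  have lb: "length b' \<ge> 2" unfolding b'_def by simp
  have sb: "sorted b'" unfolding b'_def using J fJ by (auto simp: sorted_append less_imp_le)
  have bp: "\<forall>x\<in>set b'. x \<le> p" unfolding b'_def using J fJ by auto
  have lastb: "b' ! (length b' - 1) = p" unfolding b'_def by (simp add: nth_append)
  have tp: "length (take p v) = p" using p by simp
  have e1: "blocks (take p v) J = map (\<lambda>i. take (b' ! Suc i - b' ! i) (drop (b' ! i) (take p v))) [0..<length b' - 1]"
    unfolding blocks_def Let_def b'_def tp by simp
  have e2: "blocks v (insert p J) = map (\<lambda>i. take ((b' @ [length v]) ! Suc i - (b' @ [length v]) ! i) (drop ((b' @ [length v]) ! i) v)) [0..<length b']"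
    unfolding blocks_def Let_def b by simp
  have up: "[0..<length b'] = [0..<length b' - 1] @ [length b' - 1]"
    using lb by (metis Suc_diff_1 less_le_trans pos2 upt_Suc_append zero_le)
  have "map (\<lambda>i. take ((b' @ [length v]) ! Suc i - (b' @ [length v]) ! i) (drop ((b' @ [length v]) ! i) v)) [0..<length b' - 1]
      = map (\<lambda>i. take (b' ! Suc i - b' ! i) (drop (b' ! i) (take p v))) [0..<length b' - 1]"
  proof (rule map_cong[OF refl])
    fix i assume "i \<in> set [0..<length b' - 1]"
    then have i: "Suc i < length b'" by auto
    have le1: "b' ! i \<le> b' ! Suc i" using sb i by (simp add: sorted_iff_nth_Suc)
    have le2: "b' ! Suc i \<le> p" using bp i nth_mem by blast
    have "take (b' ! Suc i - b' ! i) (drop (b' ! i) (take p v)) = take (b' ! Suc i - b' ! i) (drop (b' ! i) v)"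
      using le1 le2 by (simp add: drop_take min_def)
    then show "take ((b' @ [length v]) ! Suc i - (b' @ [length v]) ! i) (drop ((b' @ [length v]) ! i) v)
      = take (b' ! Suc i - b' ! i) (drop (b' ! i) (take p v))" using i by (simp add: nth_append)
  qed
  moreover have "take ((b' @ [length v]) ! Suc (length b' - 1) - (b' @ [length v]) ! (length b' - 1)) (drop ((b' @ [length v]) ! (length b' - 1)) v) = drop p v"
    using lb lastb by (simp add: nth_append)
  ultimately show ?thesis unfolding e1 e2 up by simp
qed

lemma blocks_map: "blocks (map g v) J = map (map g) (blocks v J)"
  unfolding blocks_def Let_def by (simp add: take_map drop_map)

lemma blocks_empty: "blocks v {} = [v]"
  unfolding blocks_def by (simp add: Let_def upt_Suc)

lemma vJ_empty: "vJ v {} = st v"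
  unfolding vJ_def blocks_empty by (simp add: cross_def)

lemma set_blocks: "b \<in> set (blocks v J) \<Longrightarrow> set b \<subseteq> set v"
  unfolding blocks_def Let_def by (auto dest: in_set_takeD in_set_dropD)

lemma vJ_insert:
  assumes J: "J \<subseteq> {1..<p}" and p: "p \<le> length v"
  shows "vJ v (insert p J) = cross (vJ (st (take p v)) J) (st (drop p v))"
proof -
  have "map st (blocks (st (take p v)) J) = map st (blocks (take p v) J)"
  proof -
    have "map st (blocks (st (take p v)) J) = map (st \<circ> map (stf (take p v))) (blocks (take p v) J)"
      unfolding st_stf[of "take p v"] blocks_map by simp
    also have "\<dots> = map st (blocks (take p v) J)"
    proof (rule map_cong[OF refl])
      fix b assume "b \<in> set (blocks (take p v) J)"
      then have "set b \<subseteq> set (take p v)" by (rule set_blocks)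
      then show "(st \<circ> map (stf (take p v))) b = st b"
        by (auto intro!: st_map_mono stf_mono)
    qed
    finally show ?thesis .
  qed
  then show ?thesis unfolding vJ_def blocks_insert[OF J p] by simp
qed

lemma vJ_perms: "distinct v \<Longrightarrow> J \<subseteq> {1..<length v} \<Longrightarrow> vJ v J \<in> perms (length v)"
proof (induction "length v" arbitrary: v J rule: less_induct)
  case less
  show ?case
  proof (cases "J = {}")
    case True
    then show ?thesis using st_perms[OF less.prems(1)] by (simp add: vJ_empty)
  next
    case False
    have fJ: "finite J" using less.prems(2) finite_subset by blast
    define p where "p = Max J"
    have pJ: "p \<in> J" using fJ False p_def by simp
    have p: "1 \<le> p" "p < length v" using pJ less.prems(2) by auto
    define J' where "J' = J - {p}"
    have JJ: "J = insert p J'" using pJ J'_def by auto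
    have J': "J' \<subseteq> {1..<p}"
    proof
      fix a assume a: "a \<in> J'"
      then have "a \<le> p" "a \<noteq> p" "a \<in> J" using fJ p_def J'_def by auto
      then show "a \<in> {1..<p}" using less.prems(2) by auto
    qed
    have e: "vJ v J = cross (vJ (st (take p v)) J') (st (drop p v))"
      unfolding JJ by (rule vJ_insert[OF J']) (use p in simp)
    have a: "st (take p v) \<in> perms p" using st_perms[of "take p v"] less.prems(1) p by simp
    have ad: "distinct (st (take p v))" "length (st (take p v)) = p" using perms_D[OF a] by auto
    have IH: "vJ (st (take p v)) J' \<in> perms p"
      using less.hyps[of "st (take p v)" J'] ad J' p by simp
    have x: "st (drop p v) \<in> perms (length v - p)" using st_perms[of "drop p v"] less.prems(1) by simp
    show ?thesis unfolding e using cross_perms[OF IH x] p by simp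
  qed
qed

lemma key2:
  assumes v: "v \<in> perms n" and w: "w \<in> perms n" and J: "J \<subseteq> {1..<p}" and p: "1 \<le> p" "p < n"
  shows "Des (comp_perm (inv_perm w) (vJ v (insert p J))) \<subseteq> insert p J \<longleftrightarrow>
    filter (\<lambda>a. p < a) w = map (\<lambda>j. p + j) (st (drop p v)) \<and>
    Des (comp_perm (inv_perm (filter (\<lambda>a. a \<le> p) w)) (vJ (st (take p v)) J)) \<subseteq> J"
proof -
  have vv: "length v = n" "distinct v" "set v = {1..n}" using perms_D[OF v] by auto
  have ww: "length w = n" "distinct w" "set w = {1..n}" using perms_D[OF w] by auto
  define al where "al = st (take p v)"
  define x where "x = st (drop p v)"
  define be where "be = vJ al J"
  define y where "y = cross be x"
  define u where "u = filter (\<lambda>a. a \<le> p) w"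
  define c where "c = map (\<lambda>j. p + j) x"
  have al: "al \<in> perms p" unfolding al_def using st_perms[of "take p v"] vv p by simp
  have x: "x \<in> perms (n - p)" unfolding x_def using st_perms[of "drop p v"] vv p by simp
  have xx: "length x = n - p" "distinct x" "set x = {1..n-p}" using perms_D[OF x] by auto
  have be: "be \<in> perms p" unfolding be_def using vJ_perms[of al J] perms_D[OF al] J by simp
  have bb: "length be = p" "distinct be" "set be = {1..p}" using perms_D[OF be] by auto
  have y: "y \<in> perms n" unfolding y_def using cross_perms[OF be x] p by simp
  have ye: "vJ v (insert p J) = y" unfolding y_def be_def al_def x_def
    by (rule vJ_insert[OF J]) (use p vv in simp)
  have up: "u \<in> perms p"
  proof (rule perms_I)
    show "distinct u" unfolding u_def using ww by simp
    show "set u = {1..p}" unfolding u_def using ww p by auto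
  qed
  have cd: "distinct c" unfolding c_def using xx by (simp add: distinct_map inj_on_def)
  have cs: "set c = {a \<in> set w. p < a}" unfolding c_def using xx ww set_shift[of p "n - p"] p by auto
  have lc: "length c = n - p" unfolding c_def using xx by simp
  have y1: "y ! k = be ! k" if "k < p" for k using that bb unfolding y_def cross_def by (simp add: nth_append)
  have y2: "y ! (p + k) = c ! k" if "k < n - p" for k using that bb xx unfolding y_def cross_def c_def by (simp add: nth_append)
  let ?L = "\<lambda>i. pos w (y ! (i - 1)) \<le> pos w (y ! i)"
  have G: "Des (comp_perm (inv_perm w) y) \<subseteq> insert p J \<longleftrightarrow> (\<forall>i\<in>{1..<n}. i \<notin> insert p J \<longrightarrow> ?L i)"
    by (rule good_char[OF w y])
  have split: "(\<forall>i\<in>{1..<n}. i \<notin> insert p J \<longrightarrow> ?L i) \<longleftrightarrow>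
      (\<forall>i\<in>{1..<p}. i \<notin> J \<longrightarrow> ?L i) \<and> (\<forall>i\<in>{p<..<n}. ?L i)"
  proof
    assume h: "\<forall>i\<in>{1..<n}. i \<notin> insert p J \<longrightarrow> ?L i"
    show "(\<forall>i\<in>{1..<p}. i \<notin> J \<longrightarrow> ?L i) \<and> (\<forall>i\<in>{p<..<n}. ?L i)"
    proof
      show "\<forall>i\<in>{1..<p}. i \<notin> J \<longrightarrow> ?L i" using h p by auto
      show "\<forall>i\<in>{p<..<n}. ?L i" using h p J by fastforce
    qed
  next
    assume h: "(\<forall>i\<in>{1..<p}. i \<notin> J \<longrightarrow> ?L i) \<and> (\<forall>i\<in>{p<..<n}. ?L i)"
    show "\<forall>i\<in>{1..<n}. i \<notin> insert p J \<longrightarrow> ?L i"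
    proof (intro ballI impI)
      fix i assume i: "i \<in> {1..<n}" "i \<notin> insert p J"
      show "?L i"
      proof (cases "i < p")
        case True then show ?thesis using h i by auto
      next
        case False then have "i \<in> {p<..<n}" using i by auto
        then show ?thesis using h by blast
      qed
    qed
  qed
  have a: "(\<forall>i\<in>{1..<p}. i \<notin> J \<longrightarrow> ?L i) \<longleftrightarrow> Des (comp_perm (inv_perm u) be) \<subseteq> J"
  proof -
    have "?L i \<longleftrightarrow> pos u (be ! (i - 1)) \<le> pos u (be ! i)" if i: "i \<in> {1..<p}" for i
    proof -
      have m1: "be ! (i - 1) \<in> set u" "be ! i \<in> set u" using i bb perms_D[OF up] nth_mem
        by (metis atLeastLessThan_iff less_imp_diff_less)+
      show ?thesis using y1[of i] y1[of "i - 1"] i pos_filter_le[OF ww(2), of "be ! (i - 1)" "\<lambda>a. a \<le> p" "be ! i"] m1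
        unfolding u_def by auto
    qed
    then show ?thesis using good_char[OF up be, of J] by auto
  qed
  have b: "(\<forall>i\<in>{p<..<n}. ?L i) \<longleftrightarrow> filter (\<lambda>a. p < a) w = c"
  proof -
    have "(\<forall>i\<in>{p<..<n}. ?L i) \<longleftrightarrow> (\<forall>j. Suc j < length c \<longrightarrow> pos w (c ! j) \<le> pos w (c ! Suc j))"
    proof
      assume h: "\<forall>i\<in>{p<..<n}. ?L i"
      show "\<forall>j. Suc j < length c \<longrightarrow> pos w (c ! j) \<le> pos w (c ! Suc j)"
      proof (intro allI impI)
        fix j assume j: "Suc j < length c"
        have "p + Suc j \<in> {p<..<n}" using j lc by auto
        then have "?L (p + Suc j)" using h by blast
        then show "pos w (c ! j) \<le> pos w (c ! Suc j)" using y2[of j] y2[of "Suc j"] j lc by simp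
      qed
    next
      assume h: "\<forall>j. Suc j < length c \<longrightarrow> pos w (c ! j) \<le> pos w (c ! Suc j)"
      show "\<forall>i\<in>{p<..<n}. ?L i"
      proof
        fix i assume i: "i \<in> {p<..<n}"
        define j where "j = i - p - 1"
        have ij: "i = p + Suc j" "Suc j < length c" using i lc j_def by auto
        then show "?L i" using h y2[of j] y2[of "Suc j"] lc by simp
      qed
    qed
    then show ?thesis using filter_pos_iff[OF ww(2) cd cs] by simp
  qed
  show ?thesis unfolding ye G split a b by (auto simp: c_def x_def u_def be_def al_def)
qed

definition sgnJ :: "nat set \<Rightarrow> int" where
  "sgnJ J = (if odd (card J) then 1 else -1)"

lemma lam_sum:
  "lam n v w = (\<Sum>J\<in>Pow {1..<n}. if Des (comp_perm (inv_perm w) (vJ v J)) \<subseteq> J then sgnJ J else 0)"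
proof -
  let ?G = "\<lambda>J. Des (comp_perm (inv_perm w) (vJ v J)) \<subseteq> J"
  have fP: "finite (Pow {1..<n})" by simp
  have c1: "int (card {J. J \<subseteq> {1..<n} \<and> ?G J \<and> odd (card J)}) = (\<Sum>J\<in>Pow {1..<n}. if ?G J \<and> odd (card J) then 1 else 0)"
  proof -
    have "{J. J \<subseteq> {1..<n} \<and> ?G J \<and> odd (card J)} = {J \<in> Pow {1..<n}. ?G J \<and> odd (card J)}" by auto
    then show ?thesis using sum.inter_filter[OF fP, of "\<lambda>_. (1::int)"] by simp
  qed
  have c2: "int (card {J. J \<subseteq> {1..<n} \<and> ?G J \<and> even (card J)}) = (\<Sum>J\<in>Pow {1..<n}. if ?G J \<and> even (card J) then 1 else 0)"
  proof -
    have "{J. J \<subseteq> {1..<n} \<and> ?G J \<and> even (card J)} = {J \<in> Pow {1..<n}. ?G J \<and> even (card J)}" by auto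
    then show ?thesis using sum.inter_filter[OF fP, of "\<lambda>_. (1::int)"] by simp
  qed
  show ?thesis unfolding lam_def c1 c2 sum_subtractf[symmetric]
    by (rule sum.cong) (auto simp: sgnJ_def)
qed

lemma Pow_split:
  fixes f :: "nat set \<Rightarrow> 'a::comm_monoid_add"
  shows "(\<Sum>J\<in>Pow {1..<n}. f J) = f {} + (\<Sum>p\<in>{1..<n}. \<Sum>J\<in>Pow {1..<p}. f (insert p J))"
proof (induction n)
  case 0 then show ?case by simp
next
  case (Suc n)
  show ?case
  proof (cases "n = 0")
    case True then show ?thesis by simp
  next
    case False
    have e: "{1..<Suc n} = insert n {1..<n}" using False by auto
    have d: "Pow {1..<n} \<inter> insert n ` Pow {1..<n} = {}" by auto
    have inj: "inj_on (insert n) (Pow {1..<n})"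
    proof (rule inj_onI)
      fix a b assume a: "a \<in> Pow {1..<n}" and b: "b \<in> Pow {1..<n}" and e: "insert n a = insert n b"
      have "n \<notin> a" "n \<notin> b" using a b by auto
      then have "a = insert n a - {n}" "b = insert n b - {n}" by auto
      then show "a = b" using e by simp
    qed
    have "(\<Sum>J\<in>Pow {1..<Suc n}. f J) = (\<Sum>J\<in>Pow {1..<n}. f J) + (\<Sum>J\<in>insert n ` Pow {1..<n}. f J)"
      unfolding e Pow_insert by (rule sum.union_disjoint) (use d in auto)
    also have "(\<Sum>J\<in>insert n ` Pow {1..<n}. f J) = (\<Sum>J\<in>Pow {1..<n}. f (insert n J))"
      by (rule sum.reindex[OF inj, unfolded comp_def])
    finally show ?thesis unfolding Suc.IH e by (simp add: add_ac)
  qed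
qed

lemma finite_perms: "finite (perms p)"
proof -
  have "perms p \<subseteq> {xs. set xs \<subseteq> {1..p} \<and> length xs = p}" using perms_D by blast
  then show ?thesis by (rule finite_subset) (rule finite_lists_length_eq, simp)
qed

lemma lemma_M:
  assumes v: "v \<in> perms n" and w: "w \<in> perms n" and p: "1 \<le> p" "p < n"
  shows "(\<Sum>u\<in>perms p. of_int (lam p (st (take p v)) u) * mulF u (st (drop p v)) w)
     = (of_int (\<Sum>J\<in>Pow {1..<p}. if Des (comp_perm (inv_perm w) (vJ v (insert p J))) \<subseteq> insert p J then sgnJ J else 0) :: rat)"
proof -
  have vv: "length v = n" "distinct v" "set v = {1..n}" using perms_D[OF v] by auto
  have ww: "length w = n" "distinct w" "set w = {1..n}" using perms_D[OF w] by auto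
  define al where "al = st (take p v)"
  define x where "x = st (drop p v)"
  define u0 where "u0 = filter (\<lambda>a. a \<le> p) w"
  define C where "C = (filter (\<lambda>a. p < a) w = map (\<lambda>j. p + j) x)"
  have x: "x \<in> perms (n - p)" unfolding x_def using st_perms[of "drop p v"] vv p by simp
  have u0: "u0 \<in> perms p"
  proof (rule perms_I)
    show "distinct u0" unfolding u0_def using ww by simp
    show "set u0 = {1..p}" unfolding u0_def using ww p by auto
  qed
  have np: "p + (n - p) = n" using p by simp
  have "(\<Sum>u\<in>perms p. of_int (lam p al u) * mulF u x w)
      = (\<Sum>u\<in>perms p. if u0 = u then (if C then of_int (lam p al u) else 0) else (0::rat))"
  proof (rule sum.cong[OF refl])
    fix u assume u: "u \<in> perms p"
    show "of_int (lam p al u) * mulF u x w = (if u0 = u then (if C then of_int (lam p al u) else 0) else (0::rat))"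
      unfolding mulF_char[OF u x] np C_def u0_def using w by auto
  qed
  also have "\<dots> = (if C then of_int (lam p al u0) else 0)"
    using u0 finite_perms by (simp add: sum.delta)
  also have "\<dots> = of_int (\<Sum>J\<in>Pow {1..<p}. if Des (comp_perm (inv_perm w) (vJ v (insert p J))) \<subseteq> insert p J then sgnJ J else 0)"
  proof -
    have "(if C then lam p al u0 else 0) = (\<Sum>J\<in>Pow {1..<p}. if Des (comp_perm (inv_perm w) (vJ v (insert p J))) \<subseteq> insert p J then sgnJ J else 0)"
      unfolding lam_sum
    proof (cases C)
      case True
      show "(if C then \<Sum>J\<in>Pow {1..<p}. if Des (comp_perm (inv_perm u0) (vJ al J)) \<subseteq> J then sgnJ J else 0 else 0)
        = (\<Sum>J\<in>Pow {1..<p}. if Des (comp_perm (inv_perm w) (vJ v (insert p J))) \<subseteq> insert p J then sgnJ J else 0)"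
        using True by (auto intro!: sum.cong simp: key2[OF v w _ p] C_def u0_def al_def x_def)
    next
      case False
      show "(if C then \<Sum>J\<in>Pow {1..<p}. if Des (comp_perm (inv_perm u0) (vJ al J)) \<subseteq> J then sgnJ J else 0 else 0)
        = (\<Sum>J\<in>Pow {1..<p}. if Des (comp_perm (inv_perm w) (vJ v (insert p J))) \<subseteq> insert p J then sgnJ J else 0)"
        using False by (auto intro!: sum.neutral simp: key2[OF v w _ p] C_def u0_def al_def x_def)
    qed
    then show ?thesis by (metis of_int_0)
  qed
  finally show ?thesis unfolding al_def x_def .
qed

lemma good_empty:
  assumes v: "v \<in> perms n" and w: "w \<in> perms n"
  shows "Des (comp_perm (inv_perm w) (vJ v {})) \<subseteq> {} \<longleftrightarrow> w = v"
proof -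
  have vv: "length v = n" "distinct v" "set v = {1..n}" using perms_D[OF v] by auto
  have ww: "length w = n" "distinct w" "set w = {1..n}" using perms_D[OF w] by auto
  have "Des (comp_perm (inv_perm w) (vJ v {})) \<subseteq> {} \<longleftrightarrow> (\<forall>i\<in>{1..<n}. pos w (v ! (i - 1)) \<le> pos w (v ! i))"
    using good_char[OF w v, of "{}"] by (simp add: vJ_empty st_perm_id[OF v])
  also have "\<dots> \<longleftrightarrow> (\<forall>i. Suc i < length v \<longrightarrow> pos w (v ! i) \<le> pos w (v ! Suc i))"
  proof
    assume h: "\<forall>i\<in>{1..<n}. pos w (v ! (i - 1)) \<le> pos w (v ! i)"
    show "\<forall>i. Suc i < length v \<longrightarrow> pos w (v ! i) \<le> pos w (v ! Suc i)"
    proof (intro allI impI)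
      fix i assume "Suc i < length v"
      then have "Suc i \<in> {1..<n}" using vv by auto
      then show "pos w (v ! i) \<le> pos w (v ! Suc i)" using h by fastforce
    qed
  next
    assume h: "\<forall>i. Suc i < length v \<longrightarrow> pos w (v ! i) \<le> pos w (v ! Suc i)"
    show "\<forall>i\<in>{1..<n}. pos w (v ! (i - 1)) \<le> pos w (v ! i)"
    proof
      fix i assume i: "i \<in> {1..<n}"
      then have "Suc (i - 1) < length v" "Suc (i - 1) = i" using vv by auto
      then show "pos w (v ! (i - 1)) \<le> pos w (v ! i)" using h by metis
    qed
  qed
  also have "\<dots> \<longleftrightarrow> filter (\<lambda>_. True) w = v"
  proof -
    have "set v = {a \<in> set w. True}" using vv ww by auto
    then show ?thesis using filter_pos_iff[OF ww(2) vv(2), of "\<lambda>_. True"] by simp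
  qed
  finally show ?thesis by auto
qed

lemma main_step:
  assumes v: "v \<in> perms n" and n: "1 \<le> n"
  shows "(if w \<in> perms n then (of_int (lam n v w) :: rat) else 0)
    = - (if w = v then 1 else 0) - (\<Sum>p\<in>{1..<n}. \<Sum>u\<in>perms p. of_int (lam p (st (take p v)) u) * mulF u (st (drop p v)) w)"
proof (cases "w \<in> perms n")
  case True
  note w = True
  let ?G = "\<lambda>J. Des (comp_perm (inv_perm w) (vJ v J)) \<subseteq> J"
  have sg: "sgnJ (insert p J) = - sgnJ J" if "J \<in> Pow {1..<p}" for p J
  proof -
    have "p \<notin> J" "finite J" using that finite_subset by auto
    then show ?thesis by (simp add: sgnJ_def)
  qed
  have "lam n v w = (if ?G {} then sgnJ {} else 0) + (\<Sum>p\<in>{1..<n}. \<Sum>J\<in>Pow {1..<p}. if ?G (insert p J) then sgnJ (insert p J) else 0)"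
    unfolding lam_sum by (rule Pow_split)
  also have "\<dots> = - (if w = v then 1 else 0) - (\<Sum>p\<in>{1..<n}. \<Sum>J\<in>Pow {1..<p}. if ?G (insert p J) then sgnJ J else 0)"
  proof -
    have "(\<Sum>p\<in>{1..<n}. \<Sum>J\<in>Pow {1..<p}. if ?G (insert p J) then sgnJ (insert p J) else 0)
       = (\<Sum>p\<in>{1..<n}. - (\<Sum>J\<in>Pow {1..<p}. if ?G (insert p J) then sgnJ J else 0))"
      by (rule sum.cong[OF refl], subst sum_negf[symmetric], rule sum.cong[OF refl]) (simp add: sg)
    then show ?thesis using good_empty[OF v w] by (simp add: sgnJ_def sum_negf)
  qed
  finally have L: "lam n v w = - (if w = v then 1 else 0) - (\<Sum>p\<in>{1..<n}. \<Sum>J\<in>Pow {1..<p}. if ?G (insert p J) then sgnJ J else 0)" .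
  have R: "(\<Sum>p\<in>{1..<n}. \<Sum>u\<in>perms p. of_int (lam p (st (take p v)) u) * mulF u (st (drop p v)) w)
      = (\<Sum>p\<in>{1..<n}. (of_int (\<Sum>J\<in>Pow {1..<p}. if ?G (insert p J) then sgnJ J else 0) :: rat))"
    by (rule sum.cong[OF refl]) (rule lemma_M[OF v w]; auto)
  show ?thesis unfolding R using w L by simp
next
  case False
  have "mulF u (st (drop p v)) w = 0" if "p \<in> {1..<n}" "u \<in> perms p" for p u
  proof -
    have x: "st (drop p v) \<in> perms (n - p)" using st_perms[of "drop p v"] perms_D[OF v] by simp
    have "p + (n - p) = n" using that by simp
    then show ?thesis using mulF_char[OF that(2) x, of w] False by simp
  qed
  moreover have "w \<noteq> v" using False v by auto
  ultimately show ?thesis using False by simp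
qed

lemma nil_perms: "[] \<in> perms 0"
  by (rule perms_I) auto

lemma mulF_unit_right:
  assumes u: "u \<in> perms m" shows "mulF u [] w = (if w = u then 1 else 0)"
proof -
  have uu: "set u = {1..m}" using perms_D[OF u] by auto
  have c: "(w \<in> perms (m + 0) \<and> filter (\<lambda>a. a \<le> m) w = u \<and> filter (\<lambda>a. m < a) w = map (\<lambda>j. m + j) []) \<longleftrightarrow> w = u"
  proof
    assume h: "w \<in> perms (m + 0) \<and> filter (\<lambda>a. a \<le> m) w = u \<and> filter (\<lambda>a. m < a) w = map (\<lambda>j. m + j) []"
    then have "set w = {1..m}" using perms_D by auto
    then have "filter (\<lambda>a. a \<le> m) w = w" by (auto intro: filter_True)
    then show "w = u" using h by simp
  next
    assume "w = u"
    then show "w \<in> perms (m + 0) \<and> filter (\<lambda>a. a \<le> m) w = u \<and> filter (\<lambda>a. m < a) w = map (\<lambda>j. m + j) []"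
      using u uu by (auto intro: filter_True filter_False)
  qed
  show ?thesis unfolding mulF_char[OF u nil_perms] c by simp
qed

lemma mulF_unit_left:
  assumes x: "x \<in> perms q" shows "mulF [] x w = (if w = x then 1 else 0)"
proof -
  have xx: "set x = {1..q}" using perms_D[OF x] by auto
  have c: "(w \<in> perms (0 + q) \<and> filter (\<lambda>a. a \<le> 0) w = [] \<and> filter (\<lambda>a. 0 < a) w = map (\<lambda>j. 0 + j) x) \<longleftrightarrow> w = x"
  proof
    assume h: "w \<in> perms (0 + q) \<and> filter (\<lambda>a. a \<le> 0) w = [] \<and> filter (\<lambda>a. 0 < a) w = map (\<lambda>j. 0 + j) x"
    then have "set w = {1..q}" using perms_D by auto
    then have "filter (\<lambda>a. 0 < a) w = w" by (auto intro: filter_True)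
    then show "w = x" using h by simp
  next
    assume "w = x"
    then show "w \<in> perms (0 + q) \<and> filter (\<lambda>a. a \<le> 0) w = [] \<and> filter (\<lambda>a. 0 < a) w = map (\<lambda>j. 0 + j) x"
      using x xx by (auto intro: filter_True filter_False)
  qed
  show ?thesis unfolding mulF_char[OF nil_perms x] c by simp
qed

lemma supp_basisF: "{v. basisF a v \<noteq> 0} = {a}"
  by (auto simp: basisF_def)

lemma mult_basis:
  assumes f: "\<And>u. f u \<noteq> 0 \<Longrightarrow> u \<in> perms p"
  shows "mult f (basisF x) w = (\<Sum>u\<in>perms p. f u * mulF u x w)"
proof -
  have "mult f (basisF x) w = (\<Sum>u\<in>{u. f u \<noteq> 0}. f u * mulF u x w)"
    unfolding mult_def supp_basisF by (simp add: basisF_def)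
  also have "\<dots> = (\<Sum>u\<in>perms p. f u * mulF u x w)"
    by (rule sum.mono_neutral_left) (use f finite_perms in auto)
  finally show ?thesis .
qed

lemma mult_unit_right:
  assumes f: "in_ssym f" shows "mult f (basisF []) = f"
proof
  fix w
  have fs: "finite {u. f u \<noteq> 0}" and sub: "{u. f u \<noteq> 0} \<subseteq> (\<Union>n. perms n)" using f unfolding in_ssym_def by auto
  have "mult f (basisF []) w = (\<Sum>u\<in>{u. f u \<noteq> 0}. f u * mulF u [] w)"
    unfolding mult_def supp_basisF by (simp add: basisF_def)
  also have "\<dots> = (\<Sum>u\<in>{u. f u \<noteq> 0}. if w = u then f u else 0)"
  proof (rule sum.cong[OF refl])
    fix u assume "u \<in> {u. f u \<noteq> 0}"
    then obtain m where "u \<in> perms m" using sub by blast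
    then show "f u * mulF u [] w = (if w = u then f u else 0)" by (simp add: mulF_unit_right)
  qed
  also have "\<dots> = f w" using fs by (simp add: sum.delta)
  finally show "mult f (basisF []) w = f w" .
qed

lemma mult_basis_basis: "mult (basisF a) (basisF b) w = mulF a b w"
  unfolding mult_def supp_basisF by (simp add: basisF_def)

lemma T_eq: "(\<Sum>w\<in>perms m. of_int (lam m a w) * basisF w x) = (if x \<in> perms m then (of_int (lam m a x) :: rat) else 0)"
proof -
  have "(\<Sum>w\<in>perms m. of_int (lam m a w) * basisF w x) = (\<Sum>w\<in>perms m. if x = w then (of_int (lam m a w) :: rat) else 0)"
    by (rule sum.cong) (auto simp: basisF_def)
  then show ?thesis using finite_perms by (simp add: sum.delta)
qed

lemma sum_atMost_split: "1 \<le> (n::nat) \<Longrightarrow> (\<Sum>p\<le>n. g p) = g 0 + (\<Sum>p\<in>{1..<n}. g p) + (g n :: rat)"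
proof -
  assume n: "1 \<le> n"
  have e: "{..n} = insert 0 (insert n {1..<n})" using n by auto
  have "0 \<notin> insert n {1..<n}" "n \<notin> {1..<n}" using n by auto
  then show ?thesis unfolding e by (simp add: add_ac)
qed

theorem mainTheorem8:
  fixes S :: "nat list \<Rightarrow> ssym" and n :: nat and v :: "nat list"
  assumes "n \<ge> 1" and "v \<in> perms n" and "is_antipode S"
  shows "S v = (\<lambda>x. \<Sum>w\<in>perms n. of_int (lam n v w) * basisF w x)"
proof -
  have A1: "\<And>n u. u \<in> perms n \<Longrightarrow> in_ssym (S u)" using assms(3) unfolding is_antipode_def by blast
  have A2: "\<And>n u. u \<in> perms n \<Longrightarrow> (\<lambda>w. \<Sum>p\<le>n. mult (S (st (take p u))) (basisF (st (drop p u))) w)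
          = (if n = 0 then basisF [] else (\<lambda>_. 0))" using assms(3) unfolding is_antipode_def by blast
  have st0: "st [] = []" by (simp add: st_def)
  have S0: "S [] = basisF []"
  proof -
    have "(\<lambda>w. mult (S []) (basisF []) w) = basisF []" using A2[OF nil_perms] by (simp add: st0)
    then show ?thesis using mult_unit_right[OF A1[OF nil_perms]] by (metis)
  qed
  have main: "S v = (\<lambda>x. if x \<in> perms n then of_int (lam n v x) else 0)" if "1 \<le> n" "v \<in> perms n" for n v
    using that
  proof (induction n arbitrary: v rule: less_induct)
    case (less n)
    note v = less.prems(2)
    have vv: "length v = n" "distinct v" "set v = {1..n}" using perms_D[OF v] by auto
    show ?case
    proof
      fix w
      have "(\<Sum>p\<le>n. mult (S (st (take p v))) (basisF (st (drop p v))) w) = 0"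
        using fun_cong[OF A2[OF v], of w] less.prems(1) by simp
      then have E: "mult (S (st (take 0 v))) (basisF (st (drop 0 v))) w
          + (\<Sum>p\<in>{1..<n}. mult (S (st (take p v))) (basisF (st (drop p v))) w)
          + mult (S (st (take n v))) (basisF (st (drop n v))) w = 0"
        using sum_atMost_split[OF less.prems(1)] by simp
      have g0: "mult (S (st (take 0 v))) (basisF (st (drop 0 v))) w = (if w = v then 1 else 0)"
        using st_perm_id[OF v] by (simp add: st0 S0 mult_basis_basis mulF_unit_left[OF v])
      have gn: "mult (S (st (take n v))) (basisF (st (drop n v))) w = S v w"
        using st_perm_id[OF v] vv mult_unit_right[OF A1[OF v]] by (simp add: st0)
      have gp: "mult (S (st (take p v))) (basisF (st (drop p v))) w
          = (\<Sum>u\<in>perms p. of_int (lam p (st (take p v)) u) * mulF u (st (drop p v)) w)"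
        if p: "p \<in> {1..<n}" for p
      proof -
        have al: "st (take p v) \<in> perms p" using st_perms[of "take p v"] vv p by simp
        have IH: "S (st (take p v)) = (\<lambda>x. if x \<in> perms p then of_int (lam p (st (take p v)) x) else 0)"
          using less.IH[of p "st (take p v)"] p al by simp
        have "mult (S (st (take p v))) (basisF (st (drop p v))) w
           = (\<Sum>u\<in>perms p. S (st (take p v)) u * mulF u (st (drop p v)) w)"
          by (rule mult_basis) (simp add: IH split: if_splits)
        also have "\<dots> = (\<Sum>u\<in>perms p. of_int (lam p (st (take p v)) u) * mulF u (st (drop p v)) w)"
          by (rule sum.cong) (simp_all add: IH)
        finally show ?thesis .
      qed
      have "S v w = - (if w = v then 1 else 0) - (\<Sum>p\<in>{1..<n}. \<Sum>u\<in>perms p. of_int (lam p (st (take p v)) u) * mulF u (st (drop p v)) w)"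
        using E g0 gn gp by (simp add: algebra_simps)
      also have "\<dots> = (if w \<in> perms n then of_int (lam n v w) else 0)"
        using main_step[OF v less.prems(1), of w] by simp
      finally show "S v w = (if w \<in> perms n then of_int (lam n v w) else 0)" .
    qed
  qed
  show ?thesis unfolding main[OF assms(1,2)] T_eq by simp
qed

end
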